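(* Let $h\in(0,2h_c(T))$, $h\neq h_c(T)$, and let $k,N$ be integers with $2^k<N$. There exists a positive constant $C_{17}$ (independent of $k$, $N$, $t$ and of the event) such that for every increasing event $A\in\mathcal F_{S(2^k)}$ and every $t\in[0,1]$, \[ C_{17}\frac{|h-h_c(T)|}{\mathfrak KT}\sum_{v\in\mathrm{Supp}(A)}\mu^N_t\big(A\cap\Delta_vA\big)\le\frac{d}{dt}\mu^N_t(A). \]
   Context: Ising model on $\mathbf{Z}^2$ with spins $\omega\in\{\pm1\}^{\mathbf Z^2}$, nearest-neighbour ferromagnetic interaction, external field $h$, temperature $T$, Boltzmann constant $\mathfrak K$; $T>T_c$ fixed; $h_c(T)$ is the threshold $\inf\{h:\mu_{T,h}(\#\mathbf C_0^+=\infty)>0\}$ for percolation of the $(+)$-cluster (cluster of $+1$ spins under nearest-neighbour adjacency) of the origin under the Gibbs measure $\mu_{T,h}$. $S(n)=[-n,n]^2$; $\mathcal F_V$ is the $\sigma$-algebra generated by the spins in $V$. Periodic measures: $\mu^N_{T,h}$ is the Gibbs measure on the torus obtained from $S(N)$ by identifying opposite sides; $h(t)=h_c(T)+t(h-h_c(T))$ if $h>h_c(T)$, $h(t)=h+t(h_c(T)-h)$ if $h<h_c(T)$; $\mu^N_t=\mu^N_{T,h(t)}$. An event is increasing if it is preserved by changing spins from $-1$ to $+1$. For $v$ and $\omega$, $\omega^v$ is $\omega$ with the spin at $v$ flipped; $\Delta_vA=\{\omega:\mathbf 1_A(\omega)+\mathbf 1_A(\omega^v)=1\}$ (configurations where $v$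 is pivotal for $A$), and $\mathrm{Supp}(A)=\{v\in\mathbf Z^2:\Delta_vA\ne\emptyset\}$. *)

theory Defs
  imports "HOL-Probability.Probability"
begin

type_synonym site = "int \<times> int"
type_synonym config = "site \<Rightarrow> int"

definition Omega :: "config set" where
  "Omega = {\<omega>. \<forall>v. \<omega> v = 1 \<or> \<omega> v = -1}"

definition adj :: "site \<Rightarrow> site \<Rightarrow> bool" where
  "adj u v \<longleftrightarrow> \<bar>fst u - fst v\<bar> + \<bar>snd u - snd v\<bar> = 1"

definition Sbox :: "nat \<Rightarrow> site set" where
  "Sbox n = {-int n..int n} \<times> {-int n..int n}"

definition F_meas :: "site set \<Rightarrow> config set \<Rightarrow> bool" where
  "F_meas V A \<longleftrightarrow> A \<subseteq> Omega \<and>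
     (\<forall>\<omega>\<in>Omega. \<forall>\<omega>'\<in>Omega. (\<forall>v\<in>V. \<omega> v = \<omega>' v) \<longrightarrow> (\<omega> \<in> A \<longleftrightarrow> \<omega>' \<in> A))"

definition increasing :: "config set \<Rightarrow> bool" where
  "increasing A \<longleftrightarrow> (\<forall>\<omega>\<in>A. \<forall>\<omega>'\<in>Omega. (\<forall>v. \<omega> v \<le> \<omega>' v) \<longrightarrow> \<omega>' \<in> A)"

definition flip :: "site \<Rightarrow> config \<Rightarrow> config" where
  "flip v \<omega> = fun_upd \<omega> v (- \<omega> v)"

definition Delta :: "site \<Rightarrow> config set \<Rightarrow> config set" where
  "Delta v A = {\<omega>\<in>Omega. indicator A \<omega> + indicator A (flip v \<omega>) = (1::real)}"

definition Supp :: "config set \<Rightarrow> site set" where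
  "Supp A = {v. Delta v A \<noteq> {}}"

text \<open>Torus obtained from S(N) by identifying opposite sides: vertex set {-N+1..N}^2,
  coordinates taken modulo 2N. Torus configurations are extended by -1 outside the box.\<close>
definition tbox :: "nat \<Rightarrow> site set" where
  "tbox N = {-int N + 1..int N} \<times> {-int N + 1..int N}"

definition wrap :: "nat \<Rightarrow> int \<Rightarrow> int" where
  "wrap N a = (a + int N - 1) mod (2 * int N) - int N + 1"

definition TConf :: "nat \<Rightarrow> config set" where
  "TConf N = {\<omega>. (\<forall>v\<in>tbox N. \<omega> v = 1 \<or> \<omega> v = -1) \<and> (\<forall>v. v \<notin> tbox N \<longrightarrow> \<omega> v = -1)}"

definition torus_energy :: "real \<Rightarrow> nat \<Rightarrow> config \<Rightarrow> real" where
  "torus_energy h N \<omega> =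
     - (\<Sum>(x,y)\<in>tbox N. real_of_int (\<omega> (x,y) * \<omega> (wrap N (x+1), y)
                                     + \<omega> (x,y) * \<omega> (x, wrap N (y+1))))
     - h * (\<Sum>v\<in>tbox N. real_of_int (\<omega> v))"

definition torus_weight :: "real \<Rightarrow> real \<Rightarrow> real \<Rightarrow> nat \<Rightarrow> config \<Rightarrow> real" where
  "torus_weight K T h N \<omega> = exp (- torus_energy h N \<omega> / (K * T))"

definition per_measure :: "real \<Rightarrow> real \<Rightarrow> real \<Rightarrow> nat \<Rightarrow> config set \<Rightarrow> real" where
  "per_measure K T h N B =
     (\<Sum>\<omega>\<in>TConf N. torus_weight K T h N \<omega> * indicator B \<omega>) /
     (\<Sum>\<omega>\<in>TConf N. torus_weight K T h N \<omega>)"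

definition hpath :: "real \<Rightarrow> real \<Rightarrow> real \<Rightarrow> real" where
  "hpath hc h t = (if h > hc then hc + t * (h - hc) else h + t * (hc - h))"

definition config_space :: "config measure" where
  "config_space = PiM UNIV (\<lambda>_. count_space {-1, 1})"

text \<open>Directed adjacent pairs with at least one endpoint in Lambda (each edge counted twice).\<close>
definition edges_touching :: "site set \<Rightarrow> (site \<times> site) set" where
  "edges_touching \<Lambda> = {(u,v). adj u v \<and> (u \<in> \<Lambda> \<or> v \<in> \<Lambda>)}"

definition local_energy :: "real \<Rightarrow> site set \<Rightarrow> config \<Rightarrow> real" where
  "local_energy h \<Lambda> \<eta> =
     - (1/2) * (\<Sum>(u,v)\<in>edges_touching \<Lambda>. real_of_int (\<eta> u * \<eta> v))
     - h * (\<Sum>v\<in>\<Lambda>. real_of_int (\<eta> v))"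

definition conf_off :: "site set \<Rightarrow> config \<Rightarrow> config set" where
  "conf_off \<Lambda> \<omega> = {\<eta>\<in>Omega. \<forall>v. v \<notin> \<Lambda> \<longrightarrow> \<eta> v = \<omega> v}"

definition spec :: "real \<Rightarrow> real \<Rightarrow> real \<Rightarrow> site set \<Rightarrow> config set \<Rightarrow> config \<Rightarrow> real" where
  "spec K T h \<Lambda> B \<omega> =
     (\<Sum>\<eta>\<in>conf_off \<Lambda> \<omega>. exp (- local_energy h \<Lambda> \<eta> / (K * T)) * indicator B \<eta>) /
     (\<Sum>\<eta>\<in>conf_off \<Lambda> \<omega>. exp (- local_energy h \<Lambda> \<eta> / (K * T)))"

definition gibbs_measure :: "real \<Rightarrow> real \<Rightarrow> real \<Rightarrow> config measure \<Rightarrow> bool" where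
  "gibbs_measure K T h \<mu> \<longleftrightarrow> sets \<mu> = sets config_space \<and> prob_space \<mu> \<and>
     (\<forall>\<Lambda> B. finite \<Lambda> \<longrightarrow> B \<in> sets config_space \<longrightarrow>
        measure \<mu> B = (\<integral>\<omega>. spec K T h \<Lambda> B \<omega> \<partial>\<mu>))"

text \<open>mu_{T,h}: the (for T > T_c unique) Gibbs measure.\<close>
definition mu_inf :: "real \<Rightarrow> real \<Rightarrow> real \<Rightarrow> config measure" where
  "mu_inf K T h = (THE \<mu>. gibbs_measure K T h \<mu>)"

definition T_c :: "real \<Rightarrow> real" where
  "T_c K = Sup {T. T > 0 \<and> (\<exists>\<mu>1 \<mu>2. gibbs_measure K T 0 \<mu>1 \<and> gibbs_measure K T 0 \<mu>2 \<and> \<mu>1 \<noteq> \<mu>2)}"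

definition plus_cluster :: "config \<Rightarrow> site set" where
  "plus_cluster \<omega> = (if \<omega> (0,0) = 1 then
      {v. ((0,0), v) \<in> {(u,w). adj u w \<and> \<omega> u = 1 \<and> \<omega> w = 1}\<^sup>*} else {})"

definition h_c :: "real \<Rightarrow> real \<Rightarrow> real" where
  "h_c K T = Inf {h. measure (mu_inf K T h) {\<omega>\<in>Omega. infinite (plus_cluster \<omega>)} > 0}"

end

theory Submission
  imports Defs
begin


lemma AD_base:
  fixes a0 a1 b0 b1 c0 c1 d0 d1 :: real
  assumes nn: "0 \<le> a0" "0 \<le> a1" "0 \<le> b0" "0 \<le> b1" "0 \<le> c0" "0 \<le> c1" "0 \<le> d0" "0 \<le> d1"
    and h1: "a0*b0 \<le> c0*d0" and h2: "a1*b0 \<le> c1*d0" and h3: "a0*b1 \<le> c1*d0" and h4: "a1*b1 \<le> c1*d1"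
  shows "(a0+a1)*(b0+b1) \<le> (c0+c1)*(d0+d1)"
proof -
  have key: "a0*b1 + a1*b0 \<le> c0*d1 + c1*d0"
  proof (cases "c1*d0 = 0")
    case True
    then have "a0*b1 = 0" "a1*b0 = 0" using h2 h3 nn by (metis mult_nonneg_nonneg order_antisym)+
    moreover have "0 \<le> c0*d1" using nn by simp
    ultimately show ?thesis using True by linarith
  next
    case False
    define u where "u = c1*d0"
    have u: "u > 0" using False nn unfolding u_def by (simp add: less_le)
    define x where "x = a0*b1"
    define y where "y = a1*b0"
    have xu: "x \<le> u" and yu: "y \<le> u" using h2 h3 unfolding x_def y_def u_def by auto
    have x0: "0 \<le> x" and y0: "0 \<le> y" using nn unfolding x_def y_def by auto
    have "x*y = (a0*b0)*(a1*b1)" unfolding x_def y_def by (simp add: algebra_simps)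
    also have "\<dots> \<le> (c0*d0)*(c1*d1)" using mult_mono[OF h1 h4] nn by auto
    also have "\<dots> = u * (c0*d1)" unfolding u_def by (simp add: algebra_simps)
    finally have xy: "x*y \<le> u*(c0*d1)" .
    have "0 \<le> (u-x)*(u-y)" using xu yu by simp
    then have "u*(x+y) \<le> u*u + x*y" by (simp add: algebra_simps)
    also have "\<dots> \<le> u*u + u*(c0*d1)" using xy by simp
    finally have "u*(x+y) \<le> u*(u + c0*d1)" by (simp add: algebra_simps)
    then have "x + y \<le> u + c0*d1" using u by simp
    then show ?thesis unfolding x_def y_def u_def by simp
  qed
  show ?thesis using h1 h4 key by (simp add: algebra_simps)
qed

lemma sum_Pow_insert:
  assumes "finite S" "x \<notin> S"
  shows "(\<Sum>X\<in>Pow (insert x S). f X) = (\<Sum>X\<in>Pow S. f X + f (insert x X))"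
proof -
  have "(\<Sum>X\<in>Pow (insert x S). f X) = (\<Sum>X\<in>Pow S. f X) + (\<Sum>X\<in>insert x ` Pow S. f X)"
    unfolding Pow_insert by (rule sum.union_disjoint) (use assms in auto)
  also have "(\<Sum>X\<in>insert x ` Pow S. f X) = (\<Sum>X\<in>Pow S. f (insert x X))"
    by (rule sum.reindex_cong[where l="insert x"]) (use assms in \<open>auto simp: inj_on_def\<close>)
  finally show ?thesis by (simp add: sum.distrib)
qed

lemma AD:
  fixes \<alpha> \<beta> \<gamma> \<delta> :: "'a set \<Rightarrow> real"
  assumes "finite S"
    and "\<And>X. 0 \<le> \<alpha> X" "\<And>X. 0 \<le> \<beta> X" "\<And>X. 0 \<le> \<gamma> X" "\<And>X. 0 \<le> \<delta> X"
    and "\<And>X Y. X \<subseteq> S \<Longrightarrow> Y \<subseteq> S \<Longrightarrow> \<alpha> X * \<beta> Y \<le> \<gamma> (X \<union> Y) * \<delta> (X \<inter> Y)"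
  shows "sum \<alpha> (Pow S) * sum \<beta> (Pow S) \<le> sum \<gamma> (Pow S) * sum \<delta> (Pow S)"
  using assms
proof (induction S arbitrary: \<alpha> \<beta> \<gamma> \<delta> rule: finite_induct)
  case empty
  then show ?case by simp
next
  case (insert x S)
  let ?a = "\<lambda>X. \<alpha> X + \<alpha> (insert x X)"
  let ?b = "\<lambda>X. \<beta> X + \<beta> (insert x X)"
  let ?c = "\<lambda>X. \<gamma> X + \<gamma> (insert x X)"
  let ?d = "\<lambda>X. \<delta> X + \<delta> (insert x X)"
  have "sum ?a (Pow S) * sum ?b (Pow S) \<le> sum ?c (Pow S) * sum ?d (Pow S)"
  proof (rule insert.IH)
    fix X Y assume X: "X \<subseteq> S" and Y: "Y \<subseteq> S"
    have xX: "x \<notin> X" and xY: "x \<notin> Y" using X Y insert.hyps by auto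
    show "?a X * ?b Y \<le> ?c (X \<union> Y) * ?d (X \<inter> Y)"
    proof (rule AD_base)
      show "\<alpha> X * \<beta> Y \<le> \<gamma> (X \<union> Y) * \<delta> (X \<inter> Y)" using insert.prems(5) X Y by (meson subset_insertI2)
      show "\<alpha> (insert x X) * \<beta> Y \<le> \<gamma> (insert x (X \<union> Y)) * \<delta> (X \<inter> Y)"
        using insert.prems(5)[of "insert x X" Y] X Y xY by (auto simp: Int_insert_left)
      show "\<alpha> X * \<beta> (insert x Y) \<le> \<gamma> (insert x (X \<union> Y)) * \<delta> (X \<inter> Y)"
        using insert.prems(5)[of X "insert x Y"] X Y xX by (auto simp: Int_insert_right)
      show "\<alpha> (insert x X) * \<beta> (insert x Y) \<le> \<gamma> (insert x (X \<union> Y)) * \<delta> (insert x (X \<inter> Y))"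
        using insert.prems(5)[of "insert x X" "insert x Y"] X Y by auto
    qed (use insert.prems in auto)
  qed (use insert.prems in \<open>auto intro: add_nonneg_nonneg\<close>)
  then show ?case using insert.hyps by (simp add: sum_Pow_insert)
qed

lemma FKG_Pow:
  fixes w f g :: "'a set \<Rightarrow> real"
  assumes "finite S"
    and w0: "\<And>X. 0 \<le> w X" and f0: "\<And>X. 0 \<le> f X" and g0: "\<And>X. 0 \<le> g X"
    and lat: "\<And>X Y. X \<subseteq> S \<Longrightarrow> Y \<subseteq> S \<Longrightarrow> w X * w Y \<le> w (X \<union> Y) * w (X \<inter> Y)"
    and fm: "\<And>X Y. X \<subseteq> Y \<Longrightarrow> Y \<subseteq> S \<Longrightarrow> f X \<le> f Y"
    and gm: "\<And>X Y. X \<subseteq> Y \<Longrightarrow> Y \<subseteq> S \<Longrightarrow> g X \<le> g Y"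
  shows "(\<Sum>X\<in>Pow S. w X * f X) * (\<Sum>X\<in>Pow S. w X * g X) \<le> (\<Sum>X\<in>Pow S. w X * f X * g X) * (\<Sum>X\<in>Pow S. w X)"
proof (rule AD[OF assms(1)])
  fix X Y assume X: "X \<subseteq> S" and Y: "Y \<subseteq> S"
  have "f X * g Y \<le> f (X \<union> Y) * g (X \<union> Y)"
    using fm[of X "X \<union> Y"] gm[of Y "X \<union> Y"] X Y f0 g0 by (intro mult_mono) auto
  moreover have "w X * w Y \<le> w (X \<union> Y) * w (X \<inter> Y)" using lat X Y .
  ultimately have "(w X * w Y) * (f X * g Y) \<le> (w (X \<union> Y) * w (X \<inter> Y)) * (f (X \<union> Y) * g (X \<union> Y))"
    using w0 f0 g0 by (metis mult_mono mult_nonneg_nonneg)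
  then show "w X * f X * (w Y * g Y) \<le> w (X \<union> Y) * f (X \<union> Y) * g (X \<union> Y) * w (X \<inter> Y)"
    by (simp add: algebra_simps)
qed (use w0 f0 g0 in auto)


definition cfg :: "site set \<Rightarrow> config" where
  "cfg X = (\<lambda>v. if v \<in> X then 1 else -1)"

lemma inj_cfg: "inj cfg"
proof (rule injI)
  fix X Y assume "cfg X = cfg Y"
  then have "\<forall>v. (v \<in> X) = (v \<in> Y)" unfolding cfg_def by (metis one_neq_neg_one)
  then show "X = Y" by blast
qed

lemma finite_tbox: "finite (tbox N)"
  unfolding tbox_def by (rule finite_cartesian_product) (rule finite_atLeastAtMost_int)+

lemma TC_eq: "TConf N = cfg ` Pow (tbox N)"
proof
  show "TConf N \<subseteq> cfg ` Pow (tbox N)"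
  proof
    fix \<omega> assume w: "\<omega> \<in> TConf N"
    have "\<omega> v = cfg {v\<in>tbox N. \<omega> v = 1} v" for v
    proof (cases "v \<in> tbox N")
      case True then show ?thesis using w unfolding TConf_def cfg_def by auto
    next
      case False then show ?thesis using w unfolding TConf_def cfg_def by (cases v) auto
    qed
    then have "\<omega> = cfg {v\<in>tbox N. \<omega> v = 1}" by blast
    then show "\<omega> \<in> cfg ` Pow (tbox N)" by blast
  qed
  show "cfg ` Pow (tbox N) \<subseteq> TConf N"
  proof
    fix \<omega> assume "\<omega> \<in> cfg ` Pow (tbox N)"
    then obtain X where X: "X \<subseteq> tbox N" and w: "\<omega> = cfg X" by blast
    have 1: "\<forall>v\<in>tbox N. cfg X v = 1 \<or> cfg X v = -1" by (simp add: cfg_def)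
    have 2: "\<forall>v. v \<notin> tbox N \<longrightarrow> cfg X v = -1" using X by (auto simp: cfg_def)
    show "\<omega> \<in> TConf N" unfolding TConf_def w using 1 2 by blast
  qed
qed

lemma finite_TC: "finite (TConf N)"
  unfolding TC_eq using finite_tbox by simp

lemma sum_TC: "(\<Sum>\<omega>\<in>TConf N. F \<omega>) = (\<Sum>X\<in>Pow (tbox N). F (cfg X))"
  unfolding TC_eq by (simp add: sum.reindex[OF inj_on_subset[OF inj_cfg subset_UNIV]])

lemma TC_vals: assumes "\<omega> \<in> TConf N" shows "\<omega> q = 1 \<or> \<omega> q = -1"
proof (cases "q \<in> tbox N")
  case True then show ?thesis using assms unfolding TConf_def by blast
next
  case False then show ?thesis using assms unfolding TConf_def by (cases q) auto
qed

lemma TC_Omega: "TConf N \<subseteq> Omega"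
  unfolding Omega_def using TC_vals by blast

lemma cfg_Omega: "cfg X \<in> Omega"
  unfolding Omega_def cfg_def by auto

definition gI :: "nat \<Rightarrow> config \<Rightarrow> site \<Rightarrow> real" where
  "gI N \<omega> p = real_of_int (\<omega> p * \<omega> (wrap N (fst p + 1), snd p) + \<omega> p * \<omega> (fst p, wrap N (snd p + 1)))"

definition Iint :: "nat \<Rightarrow> config \<Rightarrow> real" where
  "Iint N \<omega> = (\<Sum>p\<in>tbox N. gI N \<omega> p)"

definition Mg :: "nat \<Rightarrow> config \<Rightarrow> real" where
  "Mg N \<omega> = (\<Sum>v\<in>tbox N. real_of_int (\<omega> v))"

lemma energy_eq: "torus_energy h N \<omega> = - Iint N \<omega> - h * Mg N \<omega>"
  unfolding torus_energy_def Iint_def gI_def Mg_def by (simp add: split_def)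

lemma weight_eq: "torus_weight K T h N \<omega> = exp ((Iint N \<omega> + h * Mg N \<omega>) / (K*T))"
  unfolding torus_weight_def energy_eq by (simp add: minus_divide_left)

lemma cfg_prod:
  "real_of_int (cfg X p * cfg X q) + real_of_int (cfg Y p * cfg Y q)
   \<le> real_of_int (cfg (X\<union>Y) p * cfg (X\<union>Y) q) + real_of_int (cfg (X\<inter>Y) p * cfg (X\<inter>Y) q)"
  unfolding cfg_def by auto

lemma cfg_lin: "real_of_int (cfg X p) + real_of_int (cfg Y p)
   = real_of_int (cfg (X\<union>Y) p) + real_of_int (cfg (X\<inter>Y) p)"
  unfolding cfg_def by auto

lemma Iint_lat: "Iint N (cfg X) + Iint N (cfg Y) \<le> Iint N (cfg (X\<union>Y)) + Iint N (cfg (X\<inter>Y))"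
proof -
  have "Iint N (cfg X) + Iint N (cfg Y) = (\<Sum>p\<in>tbox N. gI N (cfg X) p + gI N (cfg Y) p)"
    unfolding Iint_def by (simp add: sum.distrib)
  also have "\<dots> \<le> (\<Sum>p\<in>tbox N. gI N (cfg (X\<union>Y)) p + gI N (cfg (X\<inter>Y)) p)"
  proof (rule sum_mono)
    fix p
    let ?r = "(wrap N (fst p + 1), snd p)" and ?u = "(fst p, wrap N (snd p + 1))"
    have "gI N (cfg X) p + gI N (cfg Y) p =
      (real_of_int (cfg X p * cfg X ?r) + real_of_int (cfg Y p * cfg Y ?r)) +
      (real_of_int (cfg X p * cfg X ?u) + real_of_int (cfg Y p * cfg Y ?u))"
      unfolding gI_def by simp
    also have "\<dots> \<le> (real_of_int (cfg (X\<union>Y) p * cfg (X\<union>Y) ?r) + real_of_int (cfg (X\<inter>Y) p * cfg (X\<inter>Y) ?r)) +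
      (real_of_int (cfg (X\<union>Y) p * cfg (X\<union>Y) ?u) + real_of_int (cfg (X\<inter>Y) p * cfg (X\<inter>Y) ?u))"
      by (intro add_mono cfg_prod)
    also have "\<dots> = gI N (cfg (X\<union>Y)) p + gI N (cfg (X\<inter>Y)) p"
      unfolding gI_def by simp
    finally show "gI N (cfg X) p + gI N (cfg Y) p \<le> gI N (cfg (X\<union>Y)) p + gI N (cfg (X\<inter>Y)) p" .
  qed
  also have "\<dots> = Iint N (cfg (X\<union>Y)) + Iint N (cfg (X\<inter>Y))"
    unfolding Iint_def by (simp add: sum.distrib)
  finally show ?thesis .
qed

lemma Mg_lat: "Mg N (cfg X) + Mg N (cfg Y) = Mg N (cfg (X\<union>Y)) + Mg N (cfg (X\<inter>Y))"
proof -
  have "Mg N (cfg X) + Mg N (cfg Y) = (\<Sum>v\<in>tbox N. real_of_int (cfg X v) + real_of_int (cfg Y v))"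
    unfolding Mg_def by (simp add: sum.distrib)
  also have "\<dots> = (\<Sum>v\<in>tbox N. real_of_int (cfg (X\<union>Y) v) + real_of_int (cfg (X\<inter>Y) v))"
    by (rule sum.cong[OF refl cfg_lin])
  also have "\<dots> = Mg N (cfg (X\<union>Y)) + Mg N (cfg (X\<inter>Y))"
    unfolding Mg_def by (simp add: sum.distrib)
  finally show ?thesis .
qed

lemma weight_lat:
  assumes "0 < K*T"
  shows "torus_weight K T h N (cfg X) * torus_weight K T h N (cfg Y)
    \<le> torus_weight K T h N (cfg (X\<union>Y)) * torus_weight K T h N (cfg (X\<inter>Y))"
proof -
  have "(Iint N (cfg X) + h * Mg N (cfg X)) / (K*T) + (Iint N (cfg Y) + h * Mg N (cfg Y)) / (K*T)
     \<le> (Iint N (cfg (X\<union>Y)) + h * Mg N (cfg (X\<union>Y))) / (K*T) + (Iint N (cfg (X\<inter>Y)) + h * Mg N (cfg (X\<inter>Y))) / (K*T)"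
  proof -
    have "Iint N (cfg X) + h * Mg N (cfg X) + (Iint N (cfg Y) + h * Mg N (cfg Y))
      \<le> Iint N (cfg (X\<union>Y)) + h * Mg N (cfg (X\<union>Y)) + (Iint N (cfg (X\<inter>Y)) + h * Mg N (cfg (X\<inter>Y)))"
    proof -
      have "h * Mg N (cfg X) + h * Mg N (cfg Y) = h * Mg N (cfg (X\<union>Y)) + h * Mg N (cfg (X\<inter>Y))"
        using Mg_lat[of N X Y] by (metis distrib_left)
      then show ?thesis using Iint_lat[of N X Y] by linarith
    qed
    then show ?thesis using assms by (simp add: add_divide_distrib[symmetric] divide_right_mono)
  qed
  then show ?thesis unfolding weight_eq by (simp add: exp_add[symmetric])
qed


lemma tbox_mem: "p \<in> tbox N \<longleftrightarrow> -int N + 1 \<le> fst p \<and> fst p \<le> int N \<and> -int N + 1 \<le> snd p \<and> snd p \<le> int N"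
  unfolding tbox_def by (simp only: mem_Times_iff atLeastAtMost_iff conj_assoc)

lemma wrap_inj:
  fixes N :: nat and x x' :: int
  assumes "-int N + 1 \<le> x" "x \<le> int N" "-int N + 1 \<le> x'" "x' \<le> int N"
    and eq: "wrap N (x+1) = wrap N (x'+1)"
  shows "x = x'"
proof -
  have "(x + int N) mod (2 * int N) = (x' + int N) mod (2 * int N)"
    using eq unfolding wrap_def by (simp add: algebra_simps)
  then have "(2 * int N) dvd ((x + int N) - (x' + int N))"
    by (simp add: mod_eq_dvd_iff)
  then obtain k where k: "x - x' = 2 * int N * k" by (auto simp: dvd_def)
  show ?thesis
  proof (rule ccontr)
    assume "x \<noteq> x'"
    then have "k \<noteq> 0" using k by auto
    then consider "k \<ge> 1" | "k \<le> -1" by linarith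
    then show False
    proof cases
      case 1
      have "2 * int N * 1 \<le> 2 * int N * k" using 1 by (intro mult_left_mono) auto
      then show False using k assms by linarith
    next
      case 2
      have "2 * int N * k \<le> 2 * int N * (-1)" using 2 by (intro mult_left_mono) auto
      then show False using k assms by linarith
    qed
  qed
qed

lemma card_r: "card {p\<in>tbox N. (wrap N (fst p + 1), snd p) = v} \<le> 1"
proof -
  have fin: "finite {p\<in>tbox N. (wrap N (fst p + 1), snd p) = v}" using finite_tbox by (rule rev_finite_subset) blast
  show ?thesis
    unfolding One_nat_def card_le_Suc0_iff_eq[OF fin]
  proof (intro ballI)
    fix p q assume p: "p \<in> {p\<in>tbox N. (wrap N (fst p + 1), snd p) = v}"
      and q: "q \<in> {p\<in>tbox N. (wrap N (fst p + 1), snd p) = v}"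
    have "fst p = fst q"
      by (rule wrap_inj[of N]) (use p q in \<open>auto simp: tbox_mem\<close>)
    moreover have "snd p = snd q" using p q by auto
    ultimately show "p = q" by (simp add: prod_eq_iff)
  qed
qed

lemma card_u: "card {p\<in>tbox N. (fst p, wrap N (snd p + 1)) = v} \<le> 1"
proof -
  have fin: "finite {p\<in>tbox N. (fst p, wrap N (snd p + 1)) = v}" using finite_tbox by (rule rev_finite_subset) blast
  show ?thesis
    unfolding One_nat_def card_le_Suc0_iff_eq[OF fin]
  proof (intro ballI)
    fix p q assume p: "p \<in> {p\<in>tbox N. (fst p, wrap N (snd p + 1)) = v}"
      and q: "q \<in> {p\<in>tbox N. (fst p, wrap N (snd p + 1)) = v}"
    have "snd p = snd q"
      by (rule wrap_inj[of N]) (use p q in \<open>auto simp: tbox_mem\<close>)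
    moreover have "fst p = fst q" using p q by auto
    ultimately show "p = q" by (simp add: prod_eq_iff)
  qed
qed

lemma flip_TC: assumes "v \<in> tbox N" "\<omega> \<in> TConf N" shows "flip v \<omega> \<in> TConf N"
  using assms unfolding TConf_def flip_def by auto

lemma flip_flip: "flip v (flip v \<omega>) = \<omega>"
  unfolding flip_def by (auto simp: fun_eq_iff)

lemma flip_at: "flip v \<omega> v = - \<omega> v"
  unfolding flip_def by simp

lemma flip_Omega: "\<omega> \<in> Omega \<Longrightarrow> flip v \<omega> \<in> Omega"
  unfolding Omega_def flip_def by auto

lemma Mg_flip:
  assumes v: "v \<in> tbox N"
  shows "Mg N (flip v \<omega>) = Mg N \<omega> - 2 * real_of_int (\<omega> v)"
proof -
  have A: "Mg N (flip v \<omega>) = real_of_int (flip v \<omega> v) + (\<Sum>p\<in>tbox N - {v}. real_of_int (flip v \<omega> p))"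
    unfolding Mg_def using v finite_tbox by (simp add: sum.remove)
  have B: "(\<Sum>p\<in>tbox N - {v}. real_of_int (flip v \<omega> p)) = (\<Sum>p\<in>tbox N - {v}. real_of_int (\<omega> p))"
    by (rule sum.cong) (auto simp: flip_def)
  have C: "real_of_int (flip v \<omega> v) = - real_of_int (\<omega> v)" by (simp add: flip_def)
  have D: "Mg N \<omega> = real_of_int (\<omega> v) + (\<Sum>p\<in>tbox N - {v}. real_of_int (\<omega> p))"
    unfolding Mg_def using v finite_tbox by (simp add: sum.remove)
  show ?thesis using A B C D by linarith
qed

lemma gI_bound: assumes "\<omega> \<in> TConf N" shows "\<bar>gI N \<omega> p\<bar> \<le> 2"
proof -
  have a: "\<omega> p = 1 \<or> \<omega> p = -1" using TC_vals[OF assms] .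
  have b: "\<omega> (wrap N (fst p + 1), snd p) = 1 \<or> \<omega> (wrap N (fst p + 1), snd p) = -1" using TC_vals[OF assms] .
  have c: "\<omega> (fst p, wrap N (snd p + 1)) = 1 \<or> \<omega> (fst p, wrap N (snd p + 1)) = -1" using TC_vals[OF assms] .
  from a b c show ?thesis unfolding gI_def by auto
qed

lemma Iint_flip:
  assumes v: "v \<in> tbox N" and w: "\<omega> \<in> TConf N"
  shows "Iint N \<omega> - 12 \<le> Iint N (flip v \<omega>)"
proof -
  define d where "d p = gI N (flip v \<omega>) p - gI N \<omega> p" for p
  define Bad where "Bad = {p\<in>tbox N. p = v \<or> (wrap N (fst p + 1), snd p) = v \<or> (fst p, wrap N (snd p + 1)) = v}"
  have BadS: "Bad \<subseteq> tbox N" unfolding Bad_def by auto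
  have finB: "finite Bad" using BadS finite_tbox finite_subset by blast
  have "Bad \<subseteq> {v} \<union> {p\<in>tbox N. (wrap N (fst p + 1), snd p) = v} \<union> {p\<in>tbox N. (fst p, wrap N (snd p + 1)) = v}"
    unfolding Bad_def by auto
  note sub = this
  have "card Bad \<le> card ({v} \<union> {p\<in>tbox N. (wrap N (fst p + 1), snd p) = v} \<union> {p\<in>tbox N. (fst p, wrap N (snd p + 1)) = v})"
  proof (rule card_mono)
    have f1: "finite {p\<in>tbox N. (wrap N (fst p + 1), snd p) = v}" using finite_tbox by (rule rev_finite_subset) blast
    have f2: "finite {p\<in>tbox N. (fst p, wrap N (snd p + 1)) = v}" using finite_tbox by (rule rev_finite_subset) blast
    show "finite ({v} \<union> {p\<in>tbox N. (wrap N (fst p + 1), snd p) = v} \<union> {p\<in>tbox N. (fst p, wrap N (snd p + 1)) = v})"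
      using f1 f2 by blast
  qed (rule sub)
  also have "\<dots> \<le> card {v} + card {p\<in>tbox N. (wrap N (fst p + 1), snd p) = v} + card {p\<in>tbox N. (fst p, wrap N (snd p + 1)) = v}"
    by (meson add_mono_thms_linordered_semiring(3) card_Un_le le_trans)
  also have "\<dots> \<le> 3" using card_r[of N v] card_u[of N v] by simp
  finally have cB: "card Bad \<le> 3" .
  have d0: "d p = 0" if "p \<in> tbox N - Bad" for p
    using that unfolding d_def Bad_def gI_def flip_def by auto
  have d4: "-4 \<le> d p" for p
    using gI_bound[OF flip_TC[OF v w], of p] gI_bound[OF w, of p] unfolding d_def by linarith
  have "Iint N (flip v \<omega>) - Iint N \<omega> = sum d (tbox N)"
    unfolding Iint_def d_def by (simp add: sum_subtractf)
  also have "\<dots> = sum d Bad + sum d (tbox N - Bad)"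
    using BadS finite_tbox by (metis add.commute sum.subset_diff)
  also have "sum d (tbox N - Bad) = 0" using d0 by simp
  finally have e: "Iint N (flip v \<omega>) - Iint N \<omega> = sum d Bad" by simp
  have "real (card Bad) * (-4) \<le> sum d Bad" by (rule sum_bounded_below) (rule d4)
  moreover have "real (card Bad) \<le> 3" using cB by simp
  ultimately have "-12 \<le> sum d Bad" by linarith
  then show ?thesis using e by linarith
qed

lemma weight_flip:
  assumes v: "v \<in> tbox N" and w: "\<omega> \<in> TConf N" and KT: "0 < K*T"
  shows "exp (- (12 + 2*\<bar>h\<bar>) / (K*T)) * torus_weight K T h N \<omega> \<le> torus_weight K T h N (flip v \<omega>)"
proof -
  have "\<bar>real_of_int (\<omega> v)\<bar> = 1" using TC_vals[OF w, of v] by auto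
  then have "\<bar>h * (2 * real_of_int (\<omega> v))\<bar> = 2 * \<bar>h\<bar>" by (simp add: abs_mult)
  then have hb: "h * Mg N \<omega> - 2*\<bar>h\<bar> \<le> h * Mg N (flip v \<omega>)"
    unfolding Mg_flip[OF v] by (simp add: right_diff_distrib)
  have "(Iint N \<omega> + h * Mg N \<omega>) - (12 + 2*\<bar>h\<bar>) \<le> Iint N (flip v \<omega>) + h * Mg N (flip v \<omega>)"
    using Iint_flip[OF v w] hb by linarith
  then have "(Iint N \<omega> + h * Mg N \<omega>)/(K*T) + (- (12 + 2*\<bar>h\<bar>) / (K*T)) \<le> (Iint N (flip v \<omega>) + h * Mg N (flip v \<omega>))/(K*T)"
    using KT by (simp add: divide_right_mono add_divide_distrib[symmetric] diff_divide_distrib[symmetric])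
  then have "exp ((Iint N \<omega> + h * Mg N \<omega>)/(K*T) + (- (12 + 2*\<bar>h\<bar>) / (K*T))) \<le> exp ((Iint N (flip v \<omega>) + h * Mg N (flip v \<omega>))/(K*T))"
    by simp
  then show ?thesis unfolding weight_eq by (simp add: exp_add mult.commute)
qed

lemma minus_bound:
  assumes v: "v \<in> tbox N" and KT: "0 < K*T"
  shows "exp (- (12 + 2*\<bar>h\<bar>) / (K*T)) * (\<Sum>\<omega>\<in>TConf N. torus_weight K T h N \<omega>)
     \<le> (\<Sum>\<omega>\<in>TConf N. torus_weight K T h N \<omega> * (1 - real_of_int (\<omega> v)))"
proof -
  define c where "c = exp (- (12 + 2*\<bar>h\<bar>) / (K*T))"
  define W where "W = torus_weight K T h N"
  have c0: "0 < c" unfolding c_def by simp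
  have c1: "c \<le> 1"
  proof -
    have "- (12 + 2*\<bar>h\<bar>) / (K*T) \<le> 0" by (rule divide_nonpos_pos) (use KT in auto)
    then show ?thesis unfolding c_def by simp
  qed
  have W0: "0 \<le> W \<omega>" for \<omega> unfolding W_def torus_weight_def by simp
  have "(\<Sum>\<omega>\<in>TConf N. W \<omega> * (1 - real_of_int (\<omega> v))) = (\<Sum>\<omega>\<in>TConf N. W (flip v \<omega>) * (1 + real_of_int (\<omega> v)))"
    by (rule sum.reindex_bij_witness[where i="flip v" and j="flip v"])
       (auto simp: flip_flip flip_TC[OF v] flip_at)
  also have "\<dots> \<ge> (\<Sum>\<omega>\<in>TConf N. c * W \<omega> * (1 + real_of_int (\<omega> v)))"
  proof (rule sum_mono)
    fix \<omega> assume w: "\<omega> \<in> TConf N"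
    have "0 \<le> 1 + real_of_int (\<omega> v)" using TC_vals[OF w, of v] by auto
    then show "c * W \<omega> * (1 + real_of_int (\<omega> v)) \<le> W (flip v \<omega>) * (1 + real_of_int (\<omega> v))"
      using weight_flip[OF v w KT, of h] unfolding c_def W_def by (intro mult_right_mono) auto
  qed
  finally have Mi: "c * (\<Sum>\<omega>\<in>TConf N. W \<omega> * (1 + real_of_int (\<omega> v))) \<le> (\<Sum>\<omega>\<in>TConf N. W \<omega> * (1 - real_of_int (\<omega> v)))"
    by (simp add: sum_distrib_left mult.assoc)
  have sum2: "(\<Sum>\<omega>\<in>TConf N. W \<omega> * (1 + real_of_int (\<omega> v))) + (\<Sum>\<omega>\<in>TConf N. W \<omega> * (1 - real_of_int (\<omega> v))) = 2 * (\<Sum>\<omega>\<in>TConf N. W \<omega>)"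
    by (simp add: sum.distrib[symmetric] sum_distrib_left algebra_simps)
  have Mi0: "0 \<le> (\<Sum>\<omega>\<in>TConf N. W \<omega> * (1 - real_of_int (\<omega> v)))"
  proof (rule sum_nonneg)
    fix \<omega> assume w: "\<omega> \<in> TConf N"
    have "0 \<le> 1 - real_of_int (\<omega> v)" using TC_vals[OF w, of v] by auto
    then show "0 \<le> W \<omega> * (1 - real_of_int (\<omega> v))" using W0 by simp
  qed
  define P where "P = (\<Sum>\<omega>\<in>TConf N. W \<omega> * (1 + real_of_int (\<omega> v)))"
  define M where "M = (\<Sum>\<omega>\<in>TConf N. W \<omega> * (1 - real_of_int (\<omega> v)))"
  have "c * M \<le> M" unfolding M_def by (rule mult_left_le_one_le[OF Mi0 _ c1]) (use c0 in simp)
  then have "c * (P + M) \<le> 2 * M" using Mi unfolding P_def M_def by (simp add: algebra_simps)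
  then have "c * (2 * (\<Sum>\<omega>\<in>TConf N. W \<omega>)) \<le> 2 * M" using sum2 unfolding P_def M_def by simp
  then show ?thesis unfolding c_def W_def M_def by simp
qed


lemma FKG_cov:
  fixes f :: "config \<Rightarrow> real"
  assumes KT: "0 < K*T" and f0: "\<And>\<omega>. 0 \<le> f \<omega>"
    and fm: "\<And>X Y. X \<subseteq> Y \<Longrightarrow> Y \<subseteq> tbox N \<Longrightarrow> f (cfg X) \<le> f (cfg Y)"
  shows "(\<Sum>\<omega>\<in>TConf N. torus_weight K T g N \<omega> * f \<omega>) * (\<Sum>\<omega>\<in>TConf N. torus_weight K T g N \<omega> * real_of_int (\<omega> u))
     \<le> (\<Sum>\<omega>\<in>TConf N. torus_weight K T g N \<omega> * f \<omega> * real_of_int (\<omega> u)) * (\<Sum>\<omega>\<in>TConf N. torus_weight K T g N \<omega>)"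
proof -
  define W where "W = torus_weight K T g N"
  define w where "w X = W (cfg X)" for X
  define f' where "f' X = f (cfg X)" for X
  define g' where "g' X = 1 + real_of_int (cfg X u)" for X
  have "(\<Sum>X\<in>Pow (tbox N). w X * f' X) * (\<Sum>X\<in>Pow (tbox N). w X * g' X)
     \<le> (\<Sum>X\<in>Pow (tbox N). w X * f' X * g' X) * (\<Sum>X\<in>Pow (tbox N). w X)"
  proof (rule FKG_Pow[OF finite_tbox])
    show "0 \<le> w X" for X unfolding w_def W_def torus_weight_def by simp
    show "0 \<le> f' X" for X unfolding f'_def by (rule f0)
    show "0 \<le> g' X" for X unfolding g'_def cfg_def by simp
    show "w X * w Y \<le> w (X \<union> Y) * w (X \<inter> Y)" for X Y
      unfolding w_def W_def by (rule weight_lat[OF KT])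
    show "f' X \<le> f' Y" if "X \<subseteq> Y" "Y \<subseteq> tbox N" for X Y
      unfolding f'_def by (rule fm[OF that])
    show "g' X \<le> g' Y" if "X \<subseteq> Y" "Y \<subseteq> tbox N" for X Y
      using that unfolding g'_def cfg_def by auto
  qed
  then have "(\<Sum>\<omega>\<in>TConf N. W \<omega> * f \<omega>) * (\<Sum>\<omega>\<in>TConf N. W \<omega> * (1 + real_of_int (\<omega> u)))
     \<le> (\<Sum>\<omega>\<in>TConf N. W \<omega> * f \<omega> * (1 + real_of_int (\<omega> u))) * (\<Sum>\<omega>\<in>TConf N. W \<omega>)"
    unfolding sum_TC[of _ N] w_def f'_def g'_def .
  then have "(\<Sum>\<omega>\<in>TConf N. W \<omega> * f \<omega>) * ((\<Sum>\<omega>\<in>TConf N. W \<omega>) + (\<Sum>\<omega>\<in>TConf N. W \<omega> * real_of_int (\<omega> u)))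
     \<le> ((\<Sum>\<omega>\<in>TConf N. W \<omega> * f \<omega>) + (\<Sum>\<omega>\<in>TConf N. W \<omega> * f \<omega> * real_of_int (\<omega> u))) * (\<Sum>\<omega>\<in>TConf N. W \<omega>)"
    by (simp add: sum.distrib distrib_left)
  then show ?thesis unfolding W_def by (simp add: algebra_simps)
qed

lemma TC_ne: "TConf N \<noteq> {}"
  unfolding TC_eq by auto

lemma Z_pos: "0 < (\<Sum>\<omega>\<in>TConf N. torus_weight K T g N \<omega>)"
  by (rule sum_pos[OF finite_TC TC_ne]) (simp add: torus_weight_def)

lemma deriv_pm:
  assumes KT: "0 < K*T"
  shows "((\<lambda>s. per_measure K T (a + s*b) N A) has_real_derivative
     ((\<Sum>\<omega>\<in>TConf N. torus_weight K T (a + t*b) N \<omega> * (b * Mg N \<omega> / (K*T)) * indicator A \<omega>) * (\<Sum>\<omega>\<in>TConf N. torus_weight K T (a + t*b) N \<omega>)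
      - (\<Sum>\<omega>\<in>TConf N. torus_weight K T (a + t*b) N \<omega> * indicator A \<omega>) * (\<Sum>\<omega>\<in>TConf N. torus_weight K T (a + t*b) N \<omega> * (b * Mg N \<omega> / (K*T))))
     / ((\<Sum>\<omega>\<in>TConf N. torus_weight K T (a + t*b) N \<omega>) * (\<Sum>\<omega>\<in>TConf N. torus_weight K T (a + t*b) N \<omega>))) (at t)"
proof -
  define E where "E \<omega> s = torus_weight K T (a + s*b) N \<omega>" for \<omega> s
  have dE: "(E \<omega> has_real_derivative E \<omega> t * (b * Mg N \<omega> / (K*T))) (at t)" for \<omega>
  proof -
    have "((\<lambda>s. (Iint N \<omega> + (a + s*b) * Mg N \<omega>) / (K*T)) has_real_derivative (b * Mg N \<omega> / (K*T))) (at t)"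
      using KT by (auto intro!: derivative_eq_intros)
    from DERIV_fun_exp[OF this] show ?thesis unfolding E_def weight_eq by simp
  qed
  have "((\<lambda>s. (\<Sum>\<omega>\<in>TConf N. E \<omega> s * indicator A \<omega>) / (\<Sum>\<omega>\<in>TConf N. E \<omega> s)) has_real_derivative
     ((\<Sum>\<omega>\<in>TConf N. E \<omega> t * (b * Mg N \<omega> / (K*T)) * indicator A \<omega>) * (\<Sum>\<omega>\<in>TConf N. E \<omega> t)
      - (\<Sum>\<omega>\<in>TConf N. E \<omega> t * indicator A \<omega>) * (\<Sum>\<omega>\<in>TConf N. E \<omega> t * (b * Mg N \<omega> / (K*T))))
     / ((\<Sum>\<omega>\<in>TConf N. E \<omega> t) * (\<Sum>\<omega>\<in>TConf N. E \<omega> t))) (at t)"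
  proof (rule DERIV_divide)
    show "((\<lambda>s. \<Sum>\<omega>\<in>TConf N. E \<omega> s * indicator A \<omega>) has_real_derivative (\<Sum>\<omega>\<in>TConf N. E \<omega> t * (b * Mg N \<omega> / (K*T)) * indicator A \<omega>)) (at t)"
      by (rule DERIV_sum) (rule DERIV_cmult_right[OF dE])
    show "((\<lambda>s. \<Sum>\<omega>\<in>TConf N. E \<omega> s) has_real_derivative (\<Sum>\<omega>\<in>TConf N. E \<omega> t * (b * Mg N \<omega> / (K*T)))) (at t)"
      by (rule DERIV_sum) (rule dE)
    show "(\<Sum>\<omega>\<in>TConf N. E \<omega> t) \<noteq> 0" unfolding E_def using Z_pos by (metis less_irrefl)
  qed
  moreover have "(\<lambda>s. per_measure K T (a + s*b) N A) = (\<lambda>s. (\<Sum>\<omega>\<in>TConf N. E \<omega> s * indicator A \<omega>) / (\<Sum>\<omega>\<in>TConf N. E \<omega> s))"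
    unfolding E_def per_measure_def by simp
  ultimately show ?thesis unfolding E_def by simp
qed


lemma Sbox_mem: "p \<in> Sbox n \<longleftrightarrow> -int n \<le> fst p \<and> fst p \<le> int n \<and> -int n \<le> snd p \<and> snd p \<le> int n"
  unfolding Sbox_def by (simp only: mem_Times_iff atLeastAtMost_iff conj_assoc)

lemma Sbox_tbox: assumes "n < N" shows "Sbox n \<subseteq> tbox N"
proof
  fix p assume "p \<in> Sbox n"
  then show "p \<in> tbox N" using assms unfolding Sbox_mem tbox_mem by auto
qed

lemma Supp_sub:
  assumes FA: "F_meas V A" and v: "v \<in> Supp A"
  shows "v \<in> V"
proof (rule ccontr)
  assume nv: "v \<notin> V"
  from v obtain \<omega> where w: "\<omega> \<in> Omega" and d: "indicator A \<omega> + indicator A (flip v \<omega>) = (1::real)"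
    unfolding Supp_def Delta_def by auto
  have "\<forall>u\<in>V. \<omega> u = flip v \<omega> u" using nv unfolding flip_def by auto
  then have "\<omega> \<in> A \<longleftrightarrow> flip v \<omega> \<in> A" using FA w flip_Omega[OF w] unfolding F_meas_def by blast
  then show False using d by (auto simp: indicator_def split: if_splits)
qed

lemma ind_mono:
  assumes inc: "increasing A" and XY: "X \<subseteq> Y"
  shows "indicator A (cfg X) \<le> (indicator A (cfg Y) :: real)"
proof (cases "cfg X \<in> A")
  case True
  have "\<forall>u. cfg X u \<le> cfg Y u" using XY unfolding cfg_def by auto
  then have "cfg Y \<in> A" using inc True cfg_Omega unfolding increasing_def by blast
  then show ?thesis by simp
next
  case False then show ?thesis by (simp add: indicator_def)
qed

lemma indB_mono:
  assumes inc: "increasing A" and XY: "X \<subseteq> Y"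
  shows "indicator {\<omega>\<in>A. flip v \<omega> \<in> A} (cfg X) \<le> (indicator {\<omega>\<in>A. flip v \<omega> \<in> A} (cfg Y) :: real)"
proof (cases "cfg X \<in> A \<and> flip v (cfg X) \<in> A")
  case True
  have "\<forall>u. cfg X u \<le> cfg Y u" using XY unfolding cfg_def by auto
  then have 1: "cfg Y \<in> A" using inc True cfg_Omega unfolding increasing_def by blast
  define \<omega>0 where "\<omega>0 = (if v \<in> X then flip v (cfg X) else cfg X)"
  have "\<omega>0 \<in> A" using True unfolding \<omega>0_def by auto
  moreover have "\<forall>u. \<omega>0 u \<le> flip v (cfg Y) u" using XY unfolding \<omega>0_def flip_def cfg_def by auto
  ultimately have 2: "flip v (cfg Y) \<in> A"
    using inc flip_Omega[OF cfg_Omega] unfolding increasing_def by blast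
  show ?thesis using 1 2 by simp
next
  case False then show ?thesis by (auto simp: indicator_def)
qed

lemma pivot_plus:
  assumes inc: "increasing A" and w: "\<omega> \<in> Omega" and wA: "\<omega> \<in> A \<inter> Delta v A"
  shows "\<omega> v = 1"
proof (rule ccontr)
  assume "\<omega> v \<noteq> 1"
  then have m: "\<omega> v = -1" using w unfolding Omega_def by (cases v) auto
  have "\<forall>u. \<omega> u \<le> flip v \<omega> u" using m unfolding flip_def by auto
  then have "flip v \<omega> \<in> A" using inc wA flip_Omega[OF w] unfolding increasing_def by blast
  then show False using wA unfolding Delta_def by (auto simp: indicator_def)
qed

lemma split_ind:
  assumes w: "\<omega> \<in> Omega"
  shows "(indicator A \<omega> :: real) = indicator {\<omega>\<in>A. flip v \<omega> \<in> A} \<omega> + indicator (A \<inter> Delta v A) \<omega>"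
  using w unfolding Delta_def by (auto simp: indicator_def)


lemma cov_supp:
  assumes KT: "0 < K*T" and inc: "increasing A" and vS: "v \<in> tbox N"
    and C: "C \<le> exp (- (12 + 2*\<bar>g\<bar>) / (K*T))" "0 \<le> C"
  shows "C * (\<Sum>\<omega>\<in>TConf N. torus_weight K T g N \<omega>) * (\<Sum>\<omega>\<in>TConf N. torus_weight K T g N \<omega> * indicator (A \<inter> Delta v A) \<omega>)
    \<le> (\<Sum>\<omega>\<in>TConf N. torus_weight K T g N \<omega> * indicator A \<omega> * real_of_int (\<omega> v)) * (\<Sum>\<omega>\<in>TConf N. torus_weight K T g N \<omega>)
      - (\<Sum>\<omega>\<in>TConf N. torus_weight K T g N \<omega> * indicator A \<omega>) * (\<Sum>\<omega>\<in>TConf N. torus_weight K T g N \<omega> * real_of_int (\<omega> v))"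
proof -
  define W where "W = torus_weight K T g N"
  define B where "B = {\<omega>\<in>A. flip v \<omega> \<in> A}"
  define P where "P = A \<inter> Delta v A"
  define Z where "Z = (\<Sum>\<omega>\<in>TConf N. W \<omega>)"
  define V where "V = (\<Sum>\<omega>\<in>TConf N. W \<omega> * real_of_int (\<omega> v))"
  define Q where "Q = (\<Sum>\<omega>\<in>TConf N. W \<omega> * indicator P \<omega>)"
  have sp: "(indicator A \<omega> :: real) = indicator B \<omega> + indicator P \<omega>" if "\<omega> \<in> TConf N" for \<omega>
    unfolding B_def P_def using split_ind TC_Omega that by blast
  have XA: "(\<Sum>\<omega>\<in>TConf N. W \<omega> * indicator A \<omega> * real_of_int (\<omega> v))
     = (\<Sum>\<omega>\<in>TConf N. W \<omega> * indicator B \<omega> * real_of_int (\<omega> v)) + (\<Sum>\<omega>\<in>TConf N. W \<omega> * indicator P \<omega> * real_of_int (\<omega> v))"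
    by (simp add: sum.distrib[symmetric] sp distrib_left distrib_right cong: sum.cong)
  have YA: "(\<Sum>\<omega>\<in>TConf N. W \<omega> * indicator A \<omega>)
     = (\<Sum>\<omega>\<in>TConf N. W \<omega> * indicator B \<omega>) + Q"
    unfolding Q_def by (simp add: sum.distrib[symmetric] sp distrib_left cong: sum.cong)
  have XP: "(\<Sum>\<omega>\<in>TConf N. W \<omega> * indicator P \<omega> * real_of_int (\<omega> v)) = Q"
    unfolding Q_def
  proof (rule sum.cong[OF refl])
    fix \<omega> assume w: "\<omega> \<in> TConf N"
    show "W \<omega> * indicator P \<omega> * real_of_int (\<omega> v) = W \<omega> * indicator P \<omega>"
    proof (cases "\<omega> \<in> P")
      case True
      then have "\<omega> v = 1" using pivot_plus[OF inc] TC_Omega w unfolding P_def by blast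
      then show ?thesis by simp
    qed simp
  qed
  have FB: "(\<Sum>\<omega>\<in>TConf N. W \<omega> * indicator B \<omega>) * V \<le> (\<Sum>\<omega>\<in>TConf N. W \<omega> * indicator B \<omega> * real_of_int (\<omega> v)) * Z"
    unfolding W_def V_def Z_def
    by (rule FKG_cov[OF KT]) (auto simp: B_def intro: indB_mono[OF inc])
  have mb: "exp (- (12 + 2*\<bar>g\<bar>) / (K*T)) * Z \<le> Z - V"
    using minus_bound[OF vS KT, of g] unfolding Z_def V_def W_def
    by (simp add: sum_subtractf right_diff_distrib)
  have Z0: "0 \<le> Z" unfolding Z_def W_def using Z_pos less_imp_le by blast
  have Q0: "0 \<le> Q" unfolding Q_def W_def torus_weight_def by (auto intro: sum_nonneg)
  have "C * Z \<le> Z - V" using mult_right_mono[OF C(1) Z0] mb by linarith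
  then have "Q * (C * Z) \<le> Q * (Z - V)" using Q0 by (simp add: mult_left_mono)
  then have "C * Z * Q \<le> ((\<Sum>\<omega>\<in>TConf N. W \<omega> * indicator B \<omega> * real_of_int (\<omega> v)) + Q) * Z - ((\<Sum>\<omega>\<in>TConf N. W \<omega> * indicator B \<omega>) + Q) * V"
    using FB by (simp add: algebra_simps)
  then show ?thesis
    unfolding W_def[symmetric] Z_def[symmetric] V_def[symmetric] P_def[symmetric] Q_def[symmetric] XA XP YA .
qed


lemma cov_sum:
  "(\<Sum>\<omega>\<in>TConf N. W \<omega> * Mg N \<omega> * indicator A \<omega>) * Z - Y * (\<Sum>\<omega>\<in>TConf N. W \<omega> * Mg N \<omega>)
   = (\<Sum>u\<in>tbox N. (\<Sum>\<omega>\<in>TConf N. W \<omega> * indicator A \<omega> * real_of_int (\<omega> u)) * Z - Y * (\<Sum>\<omega>\<in>TConf N. W \<omega> * real_of_int (\<omega> u)))"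
proof -
  have 1: "(\<Sum>\<omega>\<in>TConf N. W \<omega> * Mg N \<omega> * indicator A \<omega>) = (\<Sum>u\<in>tbox N. \<Sum>\<omega>\<in>TConf N. W \<omega> * indicator A \<omega> * real_of_int (\<omega> u))"
    unfolding Mg_def by (subst sum.swap) (simp add: sum_distrib_left sum_distrib_right mult_ac)
  have 2: "(\<Sum>\<omega>\<in>TConf N. W \<omega> * Mg N \<omega>) = (\<Sum>u\<in>tbox N. \<Sum>\<omega>\<in>TConf N. W \<omega> * real_of_int (\<omega> u))"
    unfolding Mg_def by (subst sum.swap) (simp add: sum_distrib_left)
  show ?thesis unfolding 1 2 by (simp add: sum_subtractf sum_distrib_left sum_distrib_right)
qed

theorem lemma8p3:
  fixes K T h :: real
  assumes "0 < K" and "0 < T" and "T > T_c K"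
    and "0 < h" and "h < 2 * h_c K T" and "h \<noteq> h_c K T"
  shows "\<exists>C17 > 0. \<forall>(k::nat) (N::nat) (A::config set) (t::real).
           2 ^ k < N \<longrightarrow> increasing A \<longrightarrow> F_meas (Sbox (2 ^ k)) A \<longrightarrow> t \<in> {0..1} \<longrightarrow>
           (\<exists>D. ((\<lambda>s. per_measure K T (hpath (h_c K T) h s) N A) has_real_derivative D) (at t) \<and>
                C17 * \<bar>h - h_c K T\<bar> / (K * T) *
                  (\<Sum>v\<in>Supp A. per_measure K T (hpath (h_c K T) h t) N (A \<inter> Delta v A)) \<le> D)"
proof -
  define hc where "hc = h_c K T"
  have KT: "0 < K*T" using assms by simp
  define b where "b = \<bar>h - hc\<bar>"
  define a where "a = (if h > hc then hc else h)"
  have hp: "hpath hc h s = a + s*b" for s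
    unfolding hpath_def a_def b_def by (auto simp: abs_if)
  define H where "H = \<bar>h\<bar> + \<bar>hc\<bar>"
  define C where "C = exp (- (12 + 2*H) / (K*T))"
  have b0: "0 \<le> b" unfolding b_def by simp
  show ?thesis unfolding hc_def[symmetric]
  proof (rule exI[of _ C], intro conjI allI impI)
    show "0 < C" unfolding C_def by simp
    fix k N :: nat and A :: "config set" and t :: real
    assume kN: "2 ^ k < N" and inc: "increasing A" and FA: "F_meas (Sbox (2 ^ k)) A" and t: "t \<in> {0..1}"
    define g where "g = a + t*b"
    have gH: "\<bar>g\<bar> \<le> H"
    proof -
      have ab: "\<bar>a\<bar> \<le> H" "\<bar>a + b\<bar> \<le> H" unfolding a_def b_def H_def by (auto simp: abs_if)
      have "g = (1-t)*a + t*(a+b)" unfolding g_def by (simp add: algebra_simps)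
      then have "\<bar>g\<bar> \<le> (1-t)*\<bar>a\<bar> + t*\<bar>a+b\<bar>"
        using t by (metis abs_of_nonneg abs_mult abs_triangle_ineq atLeastAtMost_iff diff_ge_0_iff_ge)
      also have "\<dots> \<le> (1-t)*H + t*H" using t ab by (intro add_mono mult_left_mono) auto
      finally show ?thesis by (simp add: algebra_simps)
    qed
    have CC: "C \<le> exp (- (12 + 2*\<bar>g\<bar>) / (K*T))"
      unfolding C_def using gH KT by (simp add: divide_right_mono)
    have SuppS: "Supp A \<subseteq> tbox N"
    proof
      fix v assume "v \<in> Supp A"
      then have "v \<in> Sbox (2^k)" by (rule Supp_sub[OF FA])
      then show "v \<in> tbox N" using Sbox_tbox[OF kN] by blast
    qed
    define W where "W = torus_weight K T g N"
    define Z where "Z = (\<Sum>\<omega>\<in>TConf N. W \<omega>)"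
    define Y where "Y = (\<Sum>\<omega>\<in>TConf N. W \<omega> * indicator A \<omega>)"
    define MA where "MA = (\<Sum>\<omega>\<in>TConf N. W \<omega> * Mg N \<omega> * indicator A \<omega>)"
    define MZ where "MZ = (\<Sum>\<omega>\<in>TConf N. W \<omega> * Mg N \<omega>)"
    define Q where "Q v = (\<Sum>\<omega>\<in>TConf N. W \<omega> * indicator (A \<inter> Delta v A) \<omega>)" for v
    define cov where "cov u = (\<Sum>\<omega>\<in>TConf N. W \<omega> * indicator A \<omega> * real_of_int (\<omega> u)) * Z - Y * (\<Sum>\<omega>\<in>TConf N. W \<omega> * real_of_int (\<omega> u))" for u
    define c where "c = b / (K*T)"
    have c0: "0 \<le> c" unfolding c_def using b0 KT by simp
    have Zp: "0 < Z" unfolding Z_def W_def by (rule Z_pos)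
    define D where "D = c * (MA * Z - Y * MZ) / (Z * Z)"
    have deriv: "((\<lambda>s. per_measure K T (hpath hc h s) N A) has_real_derivative D) (at t)"
    proof -
      have e1: "(\<Sum>\<omega>\<in>TConf N. W \<omega> * (b * Mg N \<omega> / (K*T)) * indicator A \<omega>) = c * MA"
        unfolding MA_def c_def by (simp add: sum_distrib_left mult_ac)
      have e2: "(\<Sum>\<omega>\<in>TConf N. W \<omega> * (b * Mg N \<omega> / (K*T))) = c * MZ"
        unfolding MZ_def c_def by (simp add: sum_distrib_left mult_ac)
      have "((\<lambda>s. per_measure K T (a + s*b) N A) has_real_derivative D) (at t)"
        using deriv_pm[OF KT, of a b N A t]
        unfolding g_def[symmetric] W_def[symmetric] e1 e2 Z_def[symmetric] Y_def[symmetric] D_def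
        by (simp add: algebra_simps)
      then show ?thesis unfolding hp .
    qed
    have covsum: "MA * Z - Y * MZ = (\<Sum>u\<in>tbox N. cov u)"
      unfolding MA_def MZ_def cov_def by (rule cov_sum)
    have cov0: "0 \<le> cov u" for u
    proof -
      have "(\<Sum>\<omega>\<in>TConf N. W \<omega> * indicator A \<omega>) * (\<Sum>\<omega>\<in>TConf N. W \<omega> * real_of_int (\<omega> u))
        \<le> (\<Sum>\<omega>\<in>TConf N. W \<omega> * indicator A \<omega> * real_of_int (\<omega> u)) * (\<Sum>\<omega>\<in>TConf N. W \<omega>)"
        unfolding W_def by (rule FKG_cov[OF KT]) (auto intro: ind_mono[OF inc])
      then show ?thesis unfolding cov_def Y_def Z_def by simp
    qed
    have covS: "C * Z * Q v \<le> cov v" if "v \<in> Supp A" for v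
      using cov_supp[OF KT inc _ CC, of v N] that SuppS C_def
      unfolding W_def Z_def Q_def cov_def Y_def by auto
    have "C * Z * (\<Sum>v\<in>Supp A. Q v) = (\<Sum>v\<in>Supp A. C * Z * Q v)" by (simp add: sum_distrib_left)
    also have "\<dots> \<le> (\<Sum>v\<in>Supp A. cov v)" by (rule sum_mono) (rule covS)
    also have "\<dots> \<le> (\<Sum>u\<in>tbox N. cov u)" by (rule sum_mono2[OF finite_tbox SuppS]) (rule cov0)
    finally have core: "C * Z * (\<Sum>v\<in>Supp A. Q v) \<le> MA * Z - Y * MZ" unfolding covsum .
    have lhs: "C * \<bar>h - hc\<bar> / (K * T) * (\<Sum>v\<in>Supp A. per_measure K T (hpath hc h t) N (A \<inter> Delta v A))
        = c * (C * Z * (\<Sum>v\<in>Supp A. Q v)) / (Z * Z)"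
    proof -
      have "per_measure K T (hpath hc h t) N (A \<inter> Delta v A) = Q v / Z" for v
        unfolding per_measure_def hp g_def[symmetric] W_def[symmetric] Q_def Z_def ..
      then have eqS: "(\<Sum>v\<in>Supp A. per_measure K T (hpath hc h t) N (A \<inter> Delta v A)) = (\<Sum>v\<in>Supp A. Q v) / Z"
        by (simp add: sum_divide_distrib)
      have "C * \<bar>h - hc\<bar> / (K * T) * ((\<Sum>v\<in>Supp A. Q v) / Z) = c * (C * Z * (\<Sum>v\<in>Supp A. Q v)) / (Z * Z)"
        unfolding c_def b_def using Zp by (simp add: field_simps)
      then show ?thesis by (simp only: eqS)
    qed
    have "c * (C * Z * (\<Sum>v\<in>Supp A. Q v)) / (Z * Z) \<le> D"
      unfolding D_def using core c0 Zp by (intro divide_right_mono mult_left_mono) auto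
    then show "\<exists>D. ((\<lambda>s. per_measure K T (hpath hc h s) N A) has_real_derivative D) (at t) \<and>
         C * \<bar>h - hc\<bar> / (K * T) * (\<Sum>v\<in>Supp A. per_measure K T (hpath hc h t) N (A \<inter> Delta v A)) \<le> D"
      using deriv lhs by auto
  qed
qed


end
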